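(* Let $B$ be a Lie algebra over a field $k$ satisfying the axioms $\Phi1$: $\forall x_1,x_2,x_3,x_4\ (x_1x_2)(x_3x_4)=0$ and $\Phi2$: $\forall x\forall y\ (xyx=0\wedge xyy=0\to xy=0)$. Then $B$ is metabelian, and $\mathrm{Fit}(B)$ as well as every nilpotent subalgebra of $B$ is abelian.
   Context: Products are left-normed: $xyx=(xy)x$. $\mathrm{Fit}(B)$, the Fitting radical of $B$, is the sum of all nilpotent ideals of $B$. *)

theory Defs
  imports "HOL.Vector_Spaces"
begin

text \<open>Products are written br x y (= xy); left-normed: xyz = br (br x y) z.\<close>

definition lie_algebra :: "('k::field \<Rightarrow> 'b::ab_group_add \<Rightarrow> 'b) \<Rightarrow> ('b \<Rightarrow> 'b \<Rightarrow> 'b) \<Rightarrow> bool" where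
  "lie_algebra s br \<longleftrightarrow> vector_space s
     \<and> (\<forall>x y z. br (x + y) z = br x z + br y z)
     \<and> (\<forall>x y z. br x (y + z) = br x y + br x z)
     \<and> (\<forall>a x y. br (s a x) y = s a (br x y))
     \<and> (\<forall>a x y. br x (s a y) = s a (br x y))
     \<and> (\<forall>x. br x x = 0)
     \<and> (\<forall>x y z. br (br x y) z + br (br y z) x + br (br z x) y = 0)"

definition prod_span :: "('k::field \<Rightarrow> 'b::ab_group_add \<Rightarrow> 'b) \<Rightarrow> ('b \<Rightarrow> 'b \<Rightarrow> 'b) \<Rightarrow> 'b set \<Rightarrow> 'b set \<Rightarrow> 'b set" where
  "prod_span s br A C = module.span s {br a c | a c. a \<in> A \<and> c \<in> C}"

text \<open>Lower central series of a subalgebra S: S^1 = S, S^(n+1) = S^n S (index shifted by one).\<close>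
fun lower_central :: "('k::field \<Rightarrow> 'b::ab_group_add \<Rightarrow> 'b) \<Rightarrow> ('b \<Rightarrow> 'b \<Rightarrow> 'b) \<Rightarrow> 'b set \<Rightarrow> nat \<Rightarrow> 'b set" where
  "lower_central s br S 0 = S"
| "lower_central s br S (Suc n) = prod_span s br (lower_central s br S n) S"

definition lie_subalgebra :: "('k::field \<Rightarrow> 'b::ab_group_add \<Rightarrow> 'b) \<Rightarrow> ('b \<Rightarrow> 'b \<Rightarrow> 'b) \<Rightarrow> 'b set \<Rightarrow> bool" where
  "lie_subalgebra s br S \<longleftrightarrow> module.subspace s S \<and> (\<forall>x\<in>S. \<forall>y\<in>S. br x y \<in> S)"

definition lie_ideal :: "('k::field \<Rightarrow> 'b::ab_group_add \<Rightarrow> 'b) \<Rightarrow> ('b \<Rightarrow> 'b \<Rightarrow> 'b) \<Rightarrow> 'b set \<Rightarrow> bool" where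
  "lie_ideal s br I \<longleftrightarrow> module.subspace s I \<and> (\<forall>x. \<forall>y\<in>I. br x y \<in> I \<and> br y x \<in> I)"

definition lie_nilpotent :: "('k::field \<Rightarrow> 'b::ab_group_add \<Rightarrow> 'b) \<Rightarrow> ('b \<Rightarrow> 'b \<Rightarrow> 'b) \<Rightarrow> 'b set \<Rightarrow> bool" where
  "lie_nilpotent s br S \<longleftrightarrow> (\<exists>n. lower_central s br S n \<subseteq> {0})"

definition lie_abelian :: "('b \<Rightarrow> 'b \<Rightarrow> 'b) \<Rightarrow> 'b::ab_group_add set \<Rightarrow> bool" where
  "lie_abelian br S \<longleftrightarrow> (\<forall>x\<in>S. \<forall>y\<in>S. br x y = 0)"

definition lie_metabelian :: "('k::field \<Rightarrow> 'b::ab_group_add \<Rightarrow> 'b) \<Rightarrow> ('b \<Rightarrow> 'b \<Rightarrow> 'b) \<Rightarrow> bool" where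
  "lie_metabelian s br \<longleftrightarrow> lie_abelian br (prod_span s br UNIV UNIV)"

definition fitting_radical :: "('k::field \<Rightarrow> 'b::ab_group_add \<Rightarrow> 'b) \<Rightarrow> ('b \<Rightarrow> 'b \<Rightarrow> 'b) \<Rightarrow> 'b set" where
  "fitting_radical s br = module.span s (\<Union>{I. lie_ideal s br I \<and> lie_nilpotent s br I})"

end

theory Submission
  imports Defs
begin

lemma la_facts:
  assumes "lie_algebra s br"
  shows "module s" "\<And>x y z. br (x + y) z = br x z + br y z"
    "\<And>x y z. br x (y + z) = br x y + br x z"
    "\<And>a x y. br (s a x) y = s a (br x y)"
    "\<And>a x y. br x (s a y) = s a (br x y)"
  using assms unfolding lie_algebra_def vector_space_def module_def by auto

lemma br_zero:
  assumes "lie_algebra s br"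
  shows "br 0 y = 0" "br y 0 = 0"
proof -
  have "br (0+0) y = br 0 y + br 0 y" using la_facts(2)[OF assms] .
  then show "br 0 y = 0" by simp
  have "br y (0+0) = br y 0 + br y 0" using la_facts(3)[OF assms] .
  then show "br y 0 = 0" by simp
qed

lemma span_abelian:
  assumes L: "lie_algebra s br" and U: "\<forall>x\<in>U. \<forall>y\<in>U. br x y = 0"
  shows "\<forall>x\<in>module.span s U. \<forall>y\<in>module.span s U. br x y = 0"
proof -
  interpret module s using la_facts(1)[OF L] .
  have 1: "span U \<subseteq> {y. \<forall>x\<in>U. br x y = 0}"
    apply (rule span_minimal)
     using U apply blast
    apply (rule subspaceI)
      apply (auto simp: br_zero[OF L] la_facts[OF L])
    done
  have 2: "span U \<subseteq> {x. \<forall>y\<in>span U. br x y = 0}"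
    apply (rule span_minimal)
     using 1 apply blast
    apply (rule subspaceI)
      apply (auto simp: br_zero[OF L] la_facts[OF L])
    done
  show ?thesis using 2 by blast
qed

lemma lc_sub:
  assumes L: "lie_algebra s br" and S: "lie_subalgebra s br S"
  shows "lower_central s br S n \<subseteq> S"
proof (induction n)
  case 0 then show ?case by simp
next
  case (Suc n)
  interpret module s using la_facts(1)[OF L] .
  show ?case unfolding lower_central.simps prod_span_def
    apply (rule span_minimal)
    using Suc S unfolding lie_subalgebra_def by auto
qed

lemma lc_step:
  assumes L: "lie_algebra s br" and S: "lie_subalgebra s br S"
    and Phi2: "\<forall>x y. br (br x y) x = 0 \<and> br (br x y) y = 0 \<longrightarrow> br x y = 0"
    and Z: "lower_central s br S (Suc (Suc n)) \<subseteq> {0}"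
  shows "lower_central s br S (Suc n) \<subseteq> {0}"
proof -
  interpret module s using la_facts(1)[OF L] .
  have "br y z = 0" if y: "y \<in> lower_central s br S n" and z: "z \<in> S" for y z
  proof -
    have yz: "br y z \<in> lower_central s br S (Suc n)"
      using y z by (auto simp: prod_span_def intro!: span_base)
    have yS: "y \<in> S" using lc_sub[OF L S] y by blast
    have "br (br y z) y \<in> lower_central s br S (Suc (Suc n))"
      using yz yS by (auto simp: prod_span_def intro!: span_base)
    moreover have "br (br y z) z \<in> lower_central s br S (Suc (Suc n))"
      using yz z by (auto simp: prod_span_def intro!: span_base)
    ultimately show ?thesis using Z Phi2 by blast
  qed
  then show ?thesis unfolding lower_central.simps(2) prod_span_def
    by (intro span_minimal) auto
qed

lemma lc_down:
  assumes L: "lie_algebra s br" and S: "lie_subalgebra s br S"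
    and Phi2: "\<forall>x y. br (br x y) x = 0 \<and> br (br x y) y = 0 \<longrightarrow> br x y = 0"
  shows "lower_central s br S (Suc d) \<subseteq> {0} \<Longrightarrow> lower_central s br S (Suc 0) \<subseteq> {0}"
proof (induction d)
  case 0 then show ?case by simp
next
  case (Suc d)
  then show ?case using lc_step[OF L S Phi2, of d] by blast
qed

lemma nilp_abelian:
  assumes L: "lie_algebra s br" and S: "lie_subalgebra s br S" and N: "lie_nilpotent s br S"
    and Phi2: "\<forall>x y. br (br x y) x = 0 \<and> br (br x y) y = 0 \<longrightarrow> br x y = 0"
  shows "lie_abelian br S"
proof -
  interpret module s using la_facts(1)[OF L] .
  obtain n where n: "lower_central s br S n \<subseteq> {0}" using N unfolding lie_nilpotent_def by blast
  show ?thesis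
  proof (cases n)
    case 0
    then show ?thesis using n br_zero[OF L] unfolding lie_abelian_def by auto
  next
    case (Suc d)
    then have 1: "lower_central s br S (Suc 0) \<subseteq> {0}" using lc_down[OF L S Phi2] n by blast
    show ?thesis unfolding lie_abelian_def
    proof (intro ballI)
      fix x y assume "x \<in> S" "y \<in> S"
      then have "br x y \<in> lower_central s br S (Suc 0)"
        by (auto simp: prod_span_def intro!: span_base)
      then show "br x y = 0" using 1 by blast
    qed
  qed
qed

theorem lemma3p1:
  fixes s :: "'k::field \<Rightarrow> 'b::ab_group_add \<Rightarrow> 'b" and br :: "'b \<Rightarrow> 'b \<Rightarrow> 'b"
  assumes "lie_algebra s br"
    and Phi1: "\<forall>x1 x2 x3 x4. br (br x1 x2) (br x3 x4) = 0"
    and Phi2: "\<forall>x y. br (br x y) x = 0 \<and> br (br x y) y = 0 \<longrightarrow> br x y = 0"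
  shows "lie_metabelian s br
    \<and> lie_abelian br (fitting_radical s br)
    \<and> (\<forall>S. lie_subalgebra s br S \<and> lie_nilpotent s br S \<longrightarrow> lie_abelian br S)"
proof (intro conjI allI impI)
  note L = assms(1)
  show "lie_metabelian s br"
    unfolding lie_metabelian_def lie_abelian_def prod_span_def
    by (rule span_abelian[OF L]) (use Phi1 in auto)
  have ideal_sub: "lie_subalgebra s br I" if "lie_ideal s br I" for I
    using that unfolding lie_ideal_def lie_subalgebra_def by blast
  show "lie_abelian br (fitting_radical s br)"
    unfolding fitting_radical_def lie_abelian_def
  proof (rule span_abelian[OF L], intro ballI)
    fix x y assume x: "x \<in> \<Union>{I. lie_ideal s br I \<and> lie_nilpotent s br I}"
      and y: "y \<in> \<Union>{I. lie_ideal s br I \<and> lie_nilpotent s br I}"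
    then obtain I J where I: "lie_ideal s br I" "lie_nilpotent s br I" "x \<in> I"
      and J: "lie_ideal s br J" "lie_nilpotent s br J" "y \<in> J" by blast
    have aI: "lie_abelian br I" using nilp_abelian[OF L ideal_sub[OF I(1)] I(2) Phi2] .
    have aJ: "lie_abelian br J" using nilp_abelian[OF L ideal_sub[OF J(1)] J(2) Phi2] .
    have "br x y \<in> I" using I unfolding lie_ideal_def by blast
    then have 1: "br (br x y) x = 0" using aI I(3) unfolding lie_abelian_def by blast
    have "br x y \<in> J" using J unfolding lie_ideal_def by blast
    then have 2: "br (br x y) y = 0" using aJ J(3) unfolding lie_abelian_def by blast
    show "br x y = 0" using Phi2 1 2 by blast
  qed
  fix S assume "lie_subalgebra s br S \<and> lie_nilpotent s br S"
  then show "lie_abelian br S" using nilp_abelian[OF L _ _ Phi2] by blast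
qed

end
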